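(* For each $j$, if $\rho$ is a positive definite operator on $\mathcal H_{\mathcal S}$ then $\mathcal L_j(\rho)$ is positive definite. As a consequence, if for some $1\le j\le M$ the map $\mathcal L_{j,\zeta_j}$ is positivity improving, then so is $\mathcal L_{cy,\boldsymbol\zeta}$.
   Context: Finite-dimensional $\mathcal H_{\mathcal S},\mathcal H_{\mathcal E_j}$ ($j=1..M$), self-adjoint $H_{\mathcal S},H_{\mathcal E_j}$, self-adjoint $V_j$, $\tau_j>0$, $U_j=e^{-i\tau_j(H_{\mathcal S}\otimes\mathrm{Id}+\mathrm{Id}\otimes H_{\mathcal E_j}+V_j)}$; $\beta_{\rm ref}>0$, $\boldsymbol\zeta\in\mathbb R^M$, $\rho_{\mathcal E_j}$ the Gibbs state of $H_{\mathcal E_j}$ at $\beta_{\rm ref}-\zeta_j$; $\mathcal L_j=\mathcal L_{j,\zeta_j}$, $\mathcal L_j(\rho)=\mathrm{Tr}_{\mathcal H_{\mathcal E_j}}(U_j(\rho\otimes\rho_{\mathcal E_j})U_j^* )$; $\mathcal L_{cy,\boldsymbol\zeta}=\mathcal L_M\circ\cdots\circ\mathcal L_1$. Positivity improving: every nonzero positive operator is mapped to a positive definite operator. *)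

theory Defs
  imports Complex_Main "Jordan_Normal_Form.Matrix"
begin

text \<open>The tensor product C^a (x) C^b is C^(a*b) with
  basis index (i,k) |-> i*b + k (system index first).\<close>

definition adj :: "complex mat \<Rightarrow> complex mat" where
  "adj A = mat (dim_col A) (dim_row A) (\<lambda>(i,j). cnj (A $$ (j,i)))"

definition self_adjoint :: "nat \<Rightarrow> complex mat \<Rightarrow> bool" where
  "self_adjoint n A \<longleftrightarrow> A \<in> carrier_mat n n \<and> adj A = A"

definition mtrace :: "complex mat \<Rightarrow> complex" where
  "mtrace A = (\<Sum>i<dim_row A. A $$ (i,i))"

definition qform :: "nat \<Rightarrow> complex mat \<Rightarrow> complex vec \<Rightarrow> complex" where
  "qform n A v = (\<Sum>i<n. \<Sum>k<n. cnj (v $ i) * A $$ (i,k) * v $ k)"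

definition positive_op :: "nat \<Rightarrow> complex mat \<Rightarrow> bool" where
  "positive_op n A \<longleftrightarrow> A \<in> carrier_mat n n \<and>
     (\<forall>v\<in>carrier_vec n. Im (qform n A v) = 0 \<and> Re (qform n A v) \<ge> 0)"

definition positive_definite :: "nat \<Rightarrow> complex mat \<Rightarrow> bool" where
  "positive_definite n A \<longleftrightarrow> A \<in> carrier_mat n n \<and>
     (\<forall>v\<in>carrier_vec n. Im (qform n A v) = 0 \<and>
        (v \<noteq> 0\<^sub>v n \<longrightarrow> Re (qform n A v) > 0))"

definition positivity_improving :: "nat \<Rightarrow> (complex mat \<Rightarrow> complex mat) \<Rightarrow> bool" where
  "positivity_improving n \<Phi> \<longleftrightarrow>
     (\<forall>\<rho>. positive_op n \<rho> \<and> \<rho> \<noteq> 0\<^sub>m n n \<longrightarrow> positive_definite n (\<Phi> \<rho>))"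

definition kron :: "complex mat \<Rightarrow> complex mat \<Rightarrow> complex mat" where
  "kron A B = mat (dim_row A * dim_row B) (dim_col A * dim_col B)
     (\<lambda>(i,j). A $$ (i div dim_row B, j div dim_col B) * B $$ (i mod dim_row B, j mod dim_col B))"

definition ptrace2 :: "nat \<Rightarrow> nat \<Rightarrow> complex mat \<Rightarrow> complex mat" where
  "ptrace2 dS dE X = mat dS dS (\<lambda>(i,j). \<Sum>k<dE. X $$ (i * dE + k, j * dE + k))"

definition mat_exp :: "complex mat \<Rightarrow> complex mat" where
  "mat_exp A = mat (dim_row A) (dim_row A)
     (\<lambda>(i,j). \<Sum>k. (A ^\<^sub>m k) $$ (i,j) / of_nat (fact k))"

definition gibbs :: "real \<Rightarrow> complex mat \<Rightarrow> complex mat" where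
  "gibbs \<beta> H = (1 / mtrace (mat_exp (complex_of_real (- \<beta>) \<cdot>\<^sub>m H)))
                 \<cdot>\<^sub>m mat_exp (complex_of_real (- \<beta>) \<cdot>\<^sub>m H)"

definition unitary_step :: "nat \<Rightarrow> nat \<Rightarrow> complex mat \<Rightarrow> complex mat \<Rightarrow> complex mat \<Rightarrow> real \<Rightarrow> complex mat" where
  "unitary_step dS dE HS HE V \<tau> =
     mat_exp ((- (\<i> * complex_of_real \<tau>)) \<cdot>\<^sub>m (kron HS (1\<^sub>m dE) + kron (1\<^sub>m dS) HE + V))"

definition rep_map :: "nat \<Rightarrow> nat \<Rightarrow> complex mat \<Rightarrow> complex mat \<Rightarrow> complex mat \<Rightarrow> real \<Rightarrow> real
    \<Rightarrow> complex mat \<Rightarrow> complex mat" where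
  "rep_map dS dE HS HE V \<tau> \<beta> \<rho> =
     (let U = unitary_step dS dE HS HE V \<tau>
      in ptrace2 dS dE (U * kron \<rho> (gibbs \<beta> HE) * adj U))"

text \<open>cycle L_M o ... o L_1 (L_1 applied first)\<close>
definition cycle_map :: "nat \<Rightarrow> (nat \<Rightarrow> complex mat \<Rightarrow> complex mat) \<Rightarrow> complex mat \<Rightarrow> complex mat" where
  "cycle_map M L \<rho> = fold L [1..<M+1] \<rho>"

end

theory Submission
  imports Defs
begin


lemma mult_entry:
  assumes "A \<in> carrier_mat n m" "B \<in> carrier_mat m p" "i < n" "j < p"
  shows "(A * B) $$ (i,j) = (\<Sum>l<m. A $$ (i,l) * B $$ (l,j))"
  using assms by (auto simp: scalar_prod_def lessThan_atLeast0 intro!: sum.cong)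

lemma pow_entry_bound:
  fixes A :: "complex mat"
  assumes A: "A \<in> carrier_mat n n"
  shows "i < n \<Longrightarrow> j < n \<Longrightarrow> norm ((A ^\<^sub>m k) $$ (i,j)) \<le> (\<Sum>i<n. \<Sum>j<n. norm (A $$ (i,j))) ^ k"
proof (induction k arbitrary: i j)
  case 0
  then show ?case using A by auto
next
  case (Suc k)
  let ?C = "(\<Sum>i<n. \<Sum>j<n. norm (A $$ (i,j)))"
  have C0: "0 \<le> ?C" by (intro sum_nonneg) auto
  have "(A ^\<^sub>m Suc k) $$ (i,j) = (\<Sum>l<n. (A ^\<^sub>m k) $$ (i,l) * A $$ (l,j))"
    using mult_entry[of "A ^\<^sub>m k" n n A n i j] Suc.prems A by simp
  hence "norm ((A ^\<^sub>m Suc k) $$ (i,j)) \<le> (\<Sum>l<n. norm ((A ^\<^sub>m k) $$ (i,l)) * norm (A $$ (l,j)))"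
    by (metis (no_types, lifting) norm_mult norm_sum sum.cong)
  also have "\<dots> \<le> (\<Sum>l<n. ?C ^ k * norm (A $$ (l,j)))"
    by (intro sum_mono mult_right_mono Suc.IH) (use Suc.prems in auto)
  also have "\<dots> = ?C ^ k * (\<Sum>l<n. norm (A $$ (l,j)))" by (simp add: sum_distrib_left)
  also have "(\<Sum>l<n. norm (A $$ (l,j))) \<le> ?C"
  proof -
    have "(\<Sum>l<n. norm (A $$ (l,j))) \<le> (\<Sum>l<n. \<Sum>j<n. norm (A $$ (l,j)))"
      by (intro sum_mono member_le_sum) (use Suc.prems in auto)
    then show ?thesis .
  qed
  then have "?C ^ k * (\<Sum>l<n. norm (A $$ (l,j))) \<le> ?C ^ k * ?C"
    by (intro mult_left_mono) (use C0 in auto)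
  finally show ?case by (simp only: power_Suc2)
qed

lemma smult_pow_mat:
  fixes A :: "complex mat"
  assumes A: "A \<in> carrier_mat n n"
  shows "(a \<cdot>\<^sub>m A) ^\<^sub>m k = a ^ k \<cdot>\<^sub>m (A ^\<^sub>m k)"
proof (induction k)
  case 0
  then show ?case using A by (auto simp: smult_mat_def)
next
  case (Suc k)
  have "(a \<cdot>\<^sub>m A) ^\<^sub>m Suc k = (a ^ k \<cdot>\<^sub>m (A ^\<^sub>m k)) * (a \<cdot>\<^sub>m A)" using Suc by simp
  also have "\<dots> = a ^ Suc k \<cdot>\<^sub>m (A ^\<^sub>m Suc k)"
    using A by (intro eq_matI) (auto simp: mult_entry[of _ n n _ n] sum_distrib_left mult_ac)
  finally show ?case .
qed

lemma pow_mat_add: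
  fixes A :: "complex mat"
  assumes A: "A \<in> carrier_mat n n"
  shows "A ^\<^sub>m p * A ^\<^sub>m q = A ^\<^sub>m (p + q)"
proof (induction q)
  case 0
  then show ?case using A by simp
next
  case (Suc q)
  have "A ^\<^sub>m p * A ^\<^sub>m Suc q = (A ^\<^sub>m p * A ^\<^sub>m q) * A"
    using A by (simp add: assoc_mult_mat[of _ n n _ n _ n])
  then show ?case using Suc by simp
qed

definition eser :: "complex mat \<Rightarrow> nat \<Rightarrow> nat \<Rightarrow> complex \<Rightarrow> nat \<Rightarrow> complex" where
  "eser A i j z k = (A ^\<^sub>m k) $$ (i,j) * z ^ k / fact k"

lemma eser_summable:
  assumes A: "A \<in> carrier_mat n n" and "i < n" "j < n"
  shows "summable (\<lambda>k. norm (eser A i j z k))"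
proof -
  let ?C = "(\<Sum>i<n. \<Sum>j<n. norm (A $$ (i,j)))"
  show ?thesis
  proof (rule summable_comparison_test[OF _ summable_exp_generic[of "?C * norm z"]])
    show "\<exists>N. \<forall>k\<ge>N. norm (norm (eser A i j z k)) \<le> (?C * norm z) ^ k /\<^sub>R fact k"
    proof (intro exI allI impI)
      fix k
      have "norm (eser A i j z k) = norm ((A ^\<^sub>m k) $$ (i,j)) * norm z ^ k / fact k"
        by (simp add: eser_def norm_mult norm_divide norm_power)
      also have "\<dots> \<le> ?C ^ k * norm z ^ k / fact k"
        by (intro divide_right_mono mult_right_mono pow_entry_bound[OF A]) (use assms in auto)
      also have "\<dots> = (?C * norm z) ^ k /\<^sub>R fact k"
        by (simp add: power_mult_distrib divide_inverse)
      finally show "norm (norm (eser A i j z k)) \<le> (?C * norm z) ^ k /\<^sub>R fact k"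
        by simp
    qed
  qed
qed

lemma mat_exp_smult_entry:
  assumes A: "A \<in> carrier_mat n n" and "i < n" "j < n"
  shows "mat_exp (a \<cdot>\<^sub>m A) $$ (i,j) = (\<Sum>k. eser A i j a k)"
  using assms by (simp add: mat_exp_def smult_pow_mat[OF A] eser_def mult.commute)

lemma mat_exp_dims[simp]: "dim_row (mat_exp X) = dim_row X" "dim_col (mat_exp X) = dim_row X"
  by (simp_all add: mat_exp_def)

lemma mat_exp_carrier[simp]: "A \<in> carrier_mat n n \<Longrightarrow> mat_exp A \<in> carrier_mat n n"
  by (simp add: mat_exp_def)

lemma eser_cauchy_term:
  assumes A: "A \<in> carrier_mat n n" and ij: "i < n" "j < n"
  shows "(\<Sum>l<n. \<Sum>p\<le>k. eser A i l a p * eser A l j b (k - p)) = eser A i j (a + b) k"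
proof -
  have "(\<Sum>l<n. \<Sum>p\<le>k. eser A i l a p * eser A l j b (k - p))
      = (\<Sum>p\<le>k. (\<Sum>l<n. (A ^\<^sub>m p) $$ (i,l) * (A ^\<^sub>m (k-p)) $$ (l,j)) * (a ^ p * b ^ (k - p) / (fact p * fact (k - p))))"
    unfolding eser_def
    by (subst sum.swap) (auto simp: sum_distrib_right sum_divide_distrib intro!: sum.cong)
  also have "\<dots> = (\<Sum>p\<le>k. (A ^\<^sub>m k) $$ (i,j) * (a ^ p * b ^ (k - p) / (fact p * fact (k - p))))"
  proof (intro sum.cong refl)
    fix p assume "p \<in> {..k}"
    hence "A ^\<^sub>m p * A ^\<^sub>m (k-p) = A ^\<^sub>m k" using pow_mat_add[OF A, of p "k-p"] by simp
    hence "(\<Sum>l<n. (A ^\<^sub>m p) $$ (i,l) * (A ^\<^sub>m (k-p)) $$ (l,j)) = (A ^\<^sub>m k) $$ (i,j)"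
      using mult_entry[of "A ^\<^sub>m p" n n "A ^\<^sub>m (k-p)" n i j] A ij by simp
    then show "(\<Sum>l<n. (A ^\<^sub>m p) $$ (i,l) * (A ^\<^sub>m (k-p)) $$ (l,j)) * (a ^ p * b ^ (k - p) / (fact p * fact (k - p)))
      = (A ^\<^sub>m k) $$ (i,j) * (a ^ p * b ^ (k - p) / (fact p * fact (k - p)))" by simp
  qed
  also have "\<dots> = (A ^\<^sub>m k) $$ (i,j) * ((\<Sum>p\<le>k. of_nat (k choose p) * a ^ p * b ^ (k - p)) / fact k)"
  proof -
    have "\<And>p. p \<le> k \<Longrightarrow> a ^ p * b ^ (k - p) / (fact p * fact (k - p)) = of_nat (k choose p) * a ^ p * b ^ (k - p) / (fact k :: complex)"
    proof -
      fix p assume pk: "p \<le> k"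
      have "(fact k :: complex) = fact p * fact (k - p) * of_nat (k choose p)"
        using binomial_fact_lemma[OF pk] by (metis of_nat_fact of_nat_mult)
      moreover have "(fact p :: complex) \<noteq> 0" "(fact (k-p) :: complex) \<noteq> 0" by auto
      moreover have "of_nat (k choose p) \<noteq> (0::complex)" using pk by simp
      ultimately show "a ^ p * b ^ (k - p) / (fact p * fact (k - p)) = of_nat (k choose p) * a ^ p * b ^ (k - p) / (fact k :: complex)"
        by (simp add: field_simps)
    qed
    then show ?thesis by (simp add: sum_distrib_left sum_divide_distrib)
  qed
  also have "\<dots> = eser A i j (a + b) k"
    by (simp add: eser_def binomial_ring[of a b k])
  finally show ?thesis .
qed

lemma mat_exp_add_smult:
  assumes A: "A \<in> carrier_mat n n"
  shows "mat_exp (a \<cdot>\<^sub>m A) * mat_exp (b \<cdot>\<^sub>m A) = mat_exp ((a + b) \<cdot>\<^sub>m A)"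
proof (rule eq_matI)
  fix i j assume "i < dim_row (mat_exp ((a + b) \<cdot>\<^sub>m A))" "j < dim_col (mat_exp ((a + b) \<cdot>\<^sub>m A))"
  hence ij: "i < n" "j < n" using A by (auto simp: mat_exp_def)
  have c1: "mat_exp (a \<cdot>\<^sub>m A) \<in> carrier_mat n n" "mat_exp (b \<cdot>\<^sub>m A) \<in> carrier_mat n n"
    using A by auto
  have "(mat_exp (a \<cdot>\<^sub>m A) * mat_exp (b \<cdot>\<^sub>m A)) $$ (i,j)
     = (\<Sum>l<n. (\<Sum>k. eser A i l a k) * (\<Sum>k. eser A l j b k))"
    using mult_entry[OF c1 ij] mat_exp_smult_entry[OF A] ij by simp
  also have "\<dots> = (\<Sum>l<n. \<Sum>k. \<Sum>p\<le>k. eser A i l a p * eser A l j b (k - p))"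
    by (intro sum.cong refl Cauchy_product eser_summable[OF A]) (use ij in auto)
  also have "\<dots> = (\<Sum>k. \<Sum>l<n. \<Sum>p\<le>k. eser A i l a p * eser A l j b (k - p))"
    by (rule suminf_sum[symmetric], intro summable_Cauchy_product eser_summable[OF A]) (use ij in auto)
  also have "\<dots> = (\<Sum>k. eser A i j (a + b) k)"
    using eser_cauchy_term[OF A ij] by simp
  also have "\<dots> = mat_exp ((a + b) \<cdot>\<^sub>m A) $$ (i,j)"
    using mat_exp_smult_entry[OF A ij] by simp
  finally show "(mat_exp (a \<cdot>\<^sub>m A) * mat_exp (b \<cdot>\<^sub>m A)) $$ (i,j) = mat_exp ((a + b) \<cdot>\<^sub>m A) $$ (i,j)" .
qed (use A in \<open>auto simp: mat_exp_def\<close>)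

lemma adj_carrier[simp]: "A \<in> carrier_mat n m \<Longrightarrow> adj A \<in> carrier_mat m n"
  by (simp add: adj_def)

lemma adj_entry[simp]: "i < dim_col A \<Longrightarrow> j < dim_row A \<Longrightarrow> adj A $$ (i,j) = cnj (A $$ (j,i))"
  by (simp add: adj_def)

lemma adj_dims[simp]: "dim_row (adj A) = dim_col A" "dim_col (adj A) = dim_row A"
  by (simp_all add: adj_def)

lemma adj_adj[simp]: "adj (adj A) = A"
  by (intro eq_matI) (auto simp: adj_def)

lemma adj_mult:
  assumes "A \<in> carrier_mat n m" "B \<in> carrier_mat m p"
  shows "adj (A * B) = adj B * adj A"
proof (rule eq_matI)
  fix i j assume "i < dim_row (adj B * adj A)" "j < dim_col (adj B * adj A)"
  hence ij: "i < p" "j < n" using assms by auto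
  have "adj (A * B) $$ (i,j) = cnj (\<Sum>l<m. A $$ (j,l) * B $$ (l,i))"
    using assms ij mult_entry[OF assms(1,2), of j i] by simp
  also have "\<dots> = (\<Sum>l<m. adj B $$ (i,l) * adj A $$ (l,j))"
    using assms ij by (auto simp: mult.commute intro!: sum.cong)
  also have "\<dots> = (adj B * adj A) $$ (i,j)"
    using mult_entry[of "adj B" p m "adj A" n i j] assms ij by simp
  finally show "adj (A * B) $$ (i,j) = (adj B * adj A) $$ (i,j)" .
qed (use assms in auto)

lemma adj_smult: "adj (c \<cdot>\<^sub>m A) = cnj c \<cdot>\<^sub>m adj A"
  by (intro eq_matI) (auto simp: adj_def)

lemma adj_one[simp]: "adj (1\<^sub>m n) = 1\<^sub>m n"
  by (intro eq_matI) (auto simp: adj_def)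

lemma pow_mat_comm:
  fixes A :: "complex mat"
  assumes A: "A \<in> carrier_mat n n"
  shows "A * A ^\<^sub>m k = A ^\<^sub>m k * A"
proof -
  have "A ^\<^sub>m 1 = A" using A by simp
  then show ?thesis using pow_mat_add[OF A, of 1 k] pow_mat_add[OF A, of k 1] by simp
qed

lemma adj_pow_herm:
  assumes A: "A \<in> carrier_mat n n" and h: "adj A = A"
  shows "adj (A ^\<^sub>m k) = A ^\<^sub>m k"
proof (induction k)
  case 0
  then show ?case using A by simp
next
  case (Suc k)
  have "adj (A ^\<^sub>m Suc k) = adj (A ^\<^sub>m k * A)" by simp
  also have "\<dots> = adj A * adj (A ^\<^sub>m k)" by (rule adj_mult[of _ n n _ n]) (use A in auto)
  also have "\<dots> = A * A ^\<^sub>m k" using Suc h by simp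
  also have "\<dots> = A ^\<^sub>m Suc k" using pow_mat_comm[OF A] by simp
  finally show ?case .
qed

lemma suminf_cnj: "summable f \<Longrightarrow> cnj (suminf f) = (\<Sum>k. cnj (f k))"
  by (metis sums_cnj summable_sums sums_unique)

lemma adj_mat_exp_herm:
  assumes A: "A \<in> carrier_mat n n" and h: "adj A = A"
  shows "adj (mat_exp (a \<cdot>\<^sub>m A)) = mat_exp (cnj a \<cdot>\<^sub>m A)"
proof (rule eq_matI)
  fix i j assume "i < dim_row (mat_exp (cnj a \<cdot>\<^sub>m A))" "j < dim_col (mat_exp (cnj a \<cdot>\<^sub>m A))"
  hence ij: "i < n" "j < n" using A by (auto simp: mat_exp_def)
  have e: "(A ^\<^sub>m k) $$ (i,j) = cnj ((A ^\<^sub>m k) $$ (j,i))" for k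
  proof -
    have "adj (A ^\<^sub>m k) $$ (i,j) = (A ^\<^sub>m k) $$ (i,j)" using adj_pow_herm[OF A h] by simp
    then show ?thesis using A ij by simp
  qed
  have "adj (mat_exp (a \<cdot>\<^sub>m A)) $$ (i,j) = cnj (\<Sum>k. eser A j i a k)"
    using A ij mat_exp_smult_entry[OF A, of j i a] by simp
  also have "\<dots> = (\<Sum>k. cnj (eser A j i a k))"
    by (rule suminf_cnj, rule summable_norm_cancel, rule eser_summable[OF A]) (use ij in auto)
  also have "\<dots> = (\<Sum>k. eser A i j (cnj a) k)"
    by (simp add: eser_def e)
  also have "\<dots> = mat_exp (cnj a \<cdot>\<^sub>m A) $$ (i,j)" using mat_exp_smult_entry[OF A ij] by simp
  finally show "adj (mat_exp (a \<cdot>\<^sub>m A)) $$ (i,j) = mat_exp (cnj a \<cdot>\<^sub>m A) $$ (i,j)" .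
qed (use A in \<open>auto simp: mat_exp_def\<close>)

lemma mat_exp_zero_smult:
  assumes A: "A \<in> carrier_mat n n"
  shows "mat_exp (0 \<cdot>\<^sub>m A) = 1\<^sub>m n"
proof (rule eq_matI)
  fix i j assume "i < dim_row (1\<^sub>m n)" "j < dim_col (1\<^sub>m n)"
  hence ij: "i < n" "j < n" by auto
  have "(\<Sum>k. eser A i j 0 k) = (\<Sum>k\<in>{0}. eser A i j 0 k)"
    by (rule suminf_finite) (auto simp: eser_def)
  also have "\<dots> = 1\<^sub>m n $$ (i,j)" using ij A by (simp add: eser_def)
  finally show "mat_exp (0 \<cdot>\<^sub>m A) $$ (i,j) = 1\<^sub>m n $$ (i,j)"
    using mat_exp_smult_entry[OF A ij, of 0] by simp
qed (use A in \<open>auto simp: mat_exp_def\<close>)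

lemma mat_exp_unitary:
  assumes A: "A \<in> carrier_mat n n" and h: "adj A = A" and c: "cnj c = - c"
  shows "mat_exp (c \<cdot>\<^sub>m A) * adj (mat_exp (c \<cdot>\<^sub>m A)) = 1\<^sub>m n"
    "adj (mat_exp (c \<cdot>\<^sub>m A)) * mat_exp (c \<cdot>\<^sub>m A) = 1\<^sub>m n"
  using mat_exp_add_smult[OF A, of c "cnj c"] mat_exp_add_smult[OF A, of "cnj c" c]
    mat_exp_zero_smult[OF A] adj_mat_exp_herm[OF A h] c by simp_all



lemma sum4_swap:
  "(\<Sum>i\<in>I. \<Sum>k\<in>K. \<Sum>p\<in>P. \<Sum>q\<in>Q. f i k p q) = (\<Sum>p\<in>P. \<Sum>q\<in>Q. \<Sum>i\<in>I. \<Sum>k\<in>K. f i k p q)"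
proof -
  have "(\<Sum>i\<in>I. \<Sum>k\<in>K. \<Sum>p\<in>P. \<Sum>q\<in>Q. f i k p q) = (\<Sum>i\<in>I. \<Sum>p\<in>P. \<Sum>k\<in>K. \<Sum>q\<in>Q. f i k p q)"
    by (rule sum.cong[OF refl], rule sum.swap)
  also have "\<dots> = (\<Sum>p\<in>P. \<Sum>i\<in>I. \<Sum>k\<in>K. \<Sum>q\<in>Q. f i k p q)" by (rule sum.swap)
  also have "\<dots> = (\<Sum>p\<in>P. \<Sum>i\<in>I. \<Sum>q\<in>Q. \<Sum>k\<in>K. f i k p q)"
    by (rule sum.cong[OF refl], rule sum.cong[OF refl], rule sum.swap)
  also have "\<dots> = (\<Sum>p\<in>P. \<Sum>q\<in>Q. \<Sum>i\<in>I. \<Sum>k\<in>K. f i k p q)"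
    by (rule sum.cong[OF refl], rule sum.swap)
  finally show ?thesis .
qed

lemma mv_entry:
  assumes "A \<in> carrier_mat m n" "v \<in> carrier_vec n" "p < m"
  shows "(A *\<^sub>v v) $ p = (\<Sum>i<n. A $$ (p,i) * v $ i)"
  using assms by (auto simp: scalar_prod_def lessThan_atLeast0 intro!: sum.cong)

lemma triple_entry:
  assumes B: "B \<in> carrier_mat n m" and Y: "Y \<in> carrier_mat m m" and ik: "i < n" "k < n"
  shows "(B * Y * adj B) $$ (i,k) = (\<Sum>p<m. \<Sum>q<m. B $$ (i,p) * Y $$ (p,q) * cnj (B $$ (k,q)))"
proof -
  have BY: "B * Y \<in> carrier_mat n m" using B Y by auto
  have "(B * Y * adj B) $$ (i,k) = (\<Sum>q<m. (B * Y) $$ (i,q) * adj B $$ (q,k))"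
    by (rule mult_entry[OF BY]) (use B ik in auto)
  also have "\<dots> = (\<Sum>q<m. (\<Sum>p<m. B $$ (i,p) * Y $$ (p,q)) * cnj (B $$ (k,q)))"
    by (intro sum.cong refl) (use B Y ik mult_entry[OF B Y] in auto)
  also have "\<dots> = (\<Sum>p<m. \<Sum>q<m. B $$ (i,p) * Y $$ (p,q) * cnj (B $$ (k,q)))"
    by (subst sum.swap) (simp add: sum_distrib_right)
  finally show ?thesis .
qed

lemma qform_congr:
  assumes B: "B \<in> carrier_mat n m" and Y: "Y \<in> carrier_mat m m" and v: "v \<in> carrier_vec n"
  shows "qform n (B * Y * adj B) v = qform m Y (adj B *\<^sub>v v)"
proof -
  have w: "(adj B *\<^sub>v v) $ p = (\<Sum>i<n. cnj (B $$ (i,p)) * v $ i)" if "p < m" for p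
    using mv_entry[of "adj B" m n v p] B v that by simp
  have "qform n (B * Y * adj B) v = (\<Sum>i<n. \<Sum>k<n. \<Sum>p<m. \<Sum>q<m.
      (cnj (v $ i) * B $$ (i,p)) * Y $$ (p,q) * (cnj (B $$ (k,q)) * v $ k))"
    unfolding qform_def
    by (intro sum.cong refl) (simp add: triple_entry[OF B Y] sum_distrib_left sum_distrib_right mult_ac)
  also have "\<dots> = (\<Sum>p<m. \<Sum>q<m. \<Sum>i<n. \<Sum>k<n.
      (cnj (v $ i) * B $$ (i,p)) * Y $$ (p,q) * (cnj (B $$ (k,q)) * v $ k))"
    by (rule sum4_swap)
  also have "\<dots> = qform m Y (adj B *\<^sub>v v)"
    unfolding qform_def
    by (intro sum.cong refl) (simp add: w sum_distrib_left sum_distrib_right mult_ac)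
  finally show ?thesis .
qed



lemma sum_idx: "(\<Sum>x<(a::nat)*b. f x) = (\<Sum>i<a. \<Sum>k<b. f (i*b+k))"
proof (induction a)
  case 0
  then show ?case by simp
next
  case (Suc a)
  have U: "{..<Suc a * b} = {..<a*b} \<union> (\<lambda>k. a*b+k) ` {..<b}"
  proof -
    have "x < a*b \<or> x \<in> (\<lambda>k. a*b+k) ` {..<b}" if "x < Suc a * b" for x
    proof (cases "x < a*b")
      case False
      then have "x = a*b + (x - a*b)" "x - a*b < b" using that by auto
      then show ?thesis by (metis image_eqI lessThan_iff)
    qed simp
    moreover have "x < Suc a * b" if "x < a*b" for x using that by simp
    ultimately show ?thesis by auto
  qed
  have "(\<Sum>x<Suc a*b. f x) = (\<Sum>x<a*b. f x) + (\<Sum>x\<in>(\<lambda>k. a*b+k) ` {..<b}. f x)"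
    unfolding U by (rule sum.union_disjoint) auto
  also have "(\<Sum>x\<in>(\<lambda>k. a*b+k) ` {..<b}. f x) = (\<Sum>k<b. f (a*b+k))"
    by (subst sum.reindex) (auto simp: inj_on_def)
  finally show ?case using Suc by simp
qed

lemma kron_carrier[simp]: "A \<in> carrier_mat a1 a2 \<Longrightarrow> B \<in> carrier_mat b1 b2 \<Longrightarrow> kron A B \<in> carrier_mat (a1*b1) (a2*b2)"
  by (simp add: kron_def)

lemma kron_dims[simp]: "dim_row (kron A B) = dim_row A * dim_row B" "dim_col (kron A B) = dim_col A * dim_col B"
  by (simp_all add: kron_def)

lemma idx_bound: assumes "i < a" "k < (b::nat)" shows "i*b+k < a*b"
proof -
  have "Suc i * b \<le> a*b" using assms(1) by (intro mult_le_mono1) auto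
  then show ?thesis using assms(2) by simp
qed

lemma idx_div[simp]: "k < (b::nat) \<Longrightarrow> (i*b+k) div b = i"
  by simp

lemma idx_mod[simp]: "k < (b::nat) \<Longrightarrow> (i*b+k) mod b = k"
  by simp

lemma kron_entry:
  assumes "A \<in> carrier_mat a1 a2" "B \<in> carrier_mat b1 b2" "i < a1" "k < b1" "j < a2" "l < b2"
  shows "kron A B $$ (i*b1+k, j*b2+l) = A $$ (i,j) * B $$ (k,l)"
  using assms idx_bound[of i a1 k b1] idx_bound[of j a2 l b2] by (simp add: kron_def)

lemma kron_mult:
  assumes A: "A \<in> carrier_mat a1 a2" and B: "B \<in> carrier_mat b1 b2"
    and C: "C \<in> carrier_mat a2 a3" and D: "D \<in> carrier_mat b2 b3"
  shows "kron A B * kron C D = kron (A * C) (B * D)"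
proof (rule eq_matI)
  fix x y assume "x < dim_row (kron (A * C) (B * D))" "y < dim_col (kron (A * C) (B * D))"
  hence xy: "x < a1*b1" "y < a3*b3" using A B C D by auto
  hence b: "b1 > 0" "b3 > 0" by (auto intro: ccontr)
  define i k j l where "i = x div b1" "k = x mod b1" "j = y div b3" "l = y mod b3"
  have x: "x = i*b1+k" and y: "y = j*b3+l" unfolding i_k_j_l_def by simp_all
  have ik: "i < a1" "k < b1" "j < a3" "l < b3" using xy b unfolding i_k_j_l_def
    by (auto simp: less_mult_imp_div_less)
  have "(kron A B * kron C D) $$ (x,y) = (\<Sum>z<a2*b2. kron A B $$ (x,z) * kron C D $$ (z,y))"
    by (rule mult_entry) (use A B C D xy in auto)
  also have "\<dots> = (\<Sum>p<a2. \<Sum>q<b2. kron A B $$ (i*b1+k,p*b2+q) * kron C D $$ (p*b2+q,j*b3+l))"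
    unfolding sum_idx x y ..
  also have "\<dots> = (\<Sum>p<a2. \<Sum>q<b2. (A $$ (i,p) * C $$ (p,j)) * (B $$ (k,q) * D $$ (q,l)))"
  proof (intro sum.cong refl)
    fix p q assume pq: "p \<in> {..<a2}" "q \<in> {..<b2}"
    have "kron A B $$ (i*b1+k, p*b2+q) = A$$(i,p) * B$$(k,q)" by (rule kron_entry[OF A B]) (use ik pq in auto)
    moreover have "kron C D $$ (p*b2+q, j*b3+l) = C$$(p,j) * D$$(q,l)" by (rule kron_entry[OF C D]) (use ik pq in auto)
    ultimately show "kron A B $$ (i*b1+k,p*b2+q) * kron C D $$ (p*b2+q,j*b3+l) = (A $$ (i,p) * C $$ (p,j)) * (B $$ (k,q) * D $$ (q,l))"
      by (simp only: mult_ac)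
  qed
  also have "\<dots> = (A * C) $$ (i,j) * (B * D) $$ (k,l)"
    by (simp add: mult_entry[OF A C] mult_entry[OF B D] ik sum_product)
  also have "\<dots> = kron (A * C) (B * D) $$ (x,y)"
    unfolding x y by (rule kron_entry[symmetric]) (use A B C D ik in auto)
  finally show "(kron A B * kron C D) $$ (x,y) = kron (A * C) (B * D) $$ (x,y)" .
qed (use A B C D in auto)

lemma idx_split1: "i < a*b \<Longrightarrow> i div b < (a::nat)"
  by (simp add: less_mult_imp_div_less)

lemma idx_split2: "i < a*b \<Longrightarrow> i mod b < (b::nat)"
proof -
  assume "i < a*b"
  then have "b > 0" by (cases b) auto
  then show ?thesis by simp
qed

lemmas idx_split = idx_split1 idx_split2

lemma adj_kron: "adj (kron A B) = kron (adj A) (adj B)"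
  by (intro eq_matI) (auto simp: adj_def kron_def idx_split)

lemma kron_smult_right: "kron A (c \<cdot>\<^sub>m B) = c \<cdot>\<^sub>m kron A B"
  by (intro eq_matI) (auto simp: kron_def idx_split)



definition slc :: "nat \<Rightarrow> nat \<Rightarrow> nat \<Rightarrow> complex vec \<Rightarrow> complex vec" where
  "slc n b k w = vec n (\<lambda>i. w $ (i*b+k))"

definition lft :: "nat \<Rightarrow> nat \<Rightarrow> nat \<Rightarrow> complex vec \<Rightarrow> complex vec" where
  "lft n b k v = vec (n*b) (\<lambda>x. if x mod b = k then v $ (x div b) else 0)"

lemma idx_vec[simp]: "i < n \<Longrightarrow> k < b \<Longrightarrow> vec (n*b) f $ (i*b+k) = f (i*b+k)"
  using idx_bound[of i n k b] by simp

lemma qform_kron_id: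
  assumes R: "R \<in> carrier_mat n n"
  shows "qform (n*b) (kron R (1\<^sub>m b)) w = (\<Sum>k<b. qform n R (slc n b k w))"
proof -
  have "qform (n*b) (kron R (1\<^sub>m b)) w = (\<Sum>i<n. \<Sum>k<b. \<Sum>j<n. \<Sum>l<b.
      cnj (w $ (i*b+k)) * kron R (1\<^sub>m b) $$ (i*b+k, j*b+l) * w $ (j*b+l))"
    unfolding qform_def sum_idx by (simp add: sum_idx)
  also have "\<dots> = (\<Sum>i<n. \<Sum>k<b. \<Sum>j<n. \<Sum>l<b.
      (if l = k then cnj (w $ (i*b+k)) * R $$ (i,j) * w $ (j*b+k) else 0))"
  proof (intro sum.cong refl)
    fix i k j l assume "i \<in> {..<n}" "k \<in> {..<b}" "j \<in> {..<n}" "l \<in> {..<b}"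
    then show "cnj (w $ (i*b+k)) * kron R (1\<^sub>m b) $$ (i*b+k, j*b+l) * w $ (j*b+l) =
      (if l = k then cnj (w $ (i*b+k)) * R $$ (i,j) * w $ (j*b+k) else 0)"
      using kron_entry[OF R one_carrier_mat[of b], of i k j l] by auto
  qed
  also have "\<dots> = (\<Sum>i<n. \<Sum>k<b. \<Sum>j<n. cnj (w $ (i*b+k)) * R $$ (i,j) * w $ (j*b+k))"
    by (simp add: sum.delta)
  also have "\<dots> = (\<Sum>k<b. \<Sum>i<n. \<Sum>j<n. cnj (w $ (i*b+k)) * R $$ (i,j) * w $ (j*b+k))"
    by (rule sum.swap)
  also have "\<dots> = (\<Sum>k<b. qform n R (slc n b k w))"
    unfolding qform_def slc_def by simp
  finally show ?thesis .
qed

lemma qform_ptrace: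
  assumes Y: "Y \<in> carrier_mat (n*b) (n*b)"
  shows "qform n (ptrace2 n b Y) v = (\<Sum>k<b. qform (n*b) Y (lft n b k v))"
proof -
  have "(\<Sum>k<b. qform (n*b) Y (lft n b k v)) = (\<Sum>k<b. \<Sum>i<n. \<Sum>k'<b. \<Sum>j<n. \<Sum>l<b.
      cnj (lft n b k v $ (i*b+k')) * Y $$ (i*b+k', j*b+l) * lft n b k v $ (j*b+l))"
    unfolding qform_def sum_idx by (simp add: sum_idx)
  also have "\<dots> = (\<Sum>k<b. \<Sum>i<n. \<Sum>k'<b.
      (if k' = k then (\<Sum>j<n. cnj (v $ i) * Y $$ (i*b+k, j*b+k) * v $ j) else 0))"
  proof (intro sum.cong refl)
    fix k i k' assume kik: "k \<in> {..<b}" "i \<in> {..<n}" "k' \<in> {..<b}"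
    show "(\<Sum>j<n. \<Sum>l<b. cnj (lft n b k v $ (i*b+k')) * Y $$ (i*b+k', j*b+l) * lft n b k v $ (j*b+l)) =
      (if k' = k then (\<Sum>j<n. cnj (v $ i) * Y $$ (i*b+k, j*b+k) * v $ j) else 0)"
    proof (cases "k' = k")
      case True
      have "(\<Sum>j<n. \<Sum>l<b. cnj (lft n b k v $ (i*b+k')) * Y $$ (i*b+k', j*b+l) * lft n b k v $ (j*b+l))
        = (\<Sum>j<n. \<Sum>l<b. if l = k then cnj (v $ i) * Y $$ (i*b+k, j*b+k) * v $ j else 0)"
        by (intro sum.cong refl) (use kik True in \<open>auto simp: lft_def\<close>)
      also have "\<dots> = (\<Sum>j<n. cnj (v $ i) * Y $$ (i*b+k, j*b+k) * v $ j)"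
        using kik by (simp add: sum.delta')
      finally show ?thesis using True by simp
    next
      case False
      then show ?thesis using kik by (auto simp: lft_def intro!: sum.neutral)
    qed
  qed
  also have "\<dots> = (\<Sum>k<b. \<Sum>i<n. \<Sum>j<n. cnj (v $ i) * Y $$ (i*b+k, j*b+k) * v $ j)"
    by (simp add: sum.delta')
  also have "\<dots> = (\<Sum>i<n. \<Sum>j<n. \<Sum>k<b. cnj (v $ i) * Y $$ (i*b+k, j*b+k) * v $ j)"
    by (subst sum.swap) (simp add: sum.swap[of _ "{..<b}" "{..<n}"])
  also have "\<dots> = qform n (ptrace2 n b Y) v"
    unfolding qform_def ptrace2_def by (simp add: sum_distrib_left sum_distrib_right)
  finally show ?thesis by simp
qed

lemma sum_re_pos:
  assumes fin: "finite S" and nn: "\<And>k. k \<in> S \<Longrightarrow> Im (f k) = 0 \<and> Re (f k) \<ge> 0"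
  shows "Im (sum f S) = 0" "Re (sum f S) \<ge> 0"
    "k0 \<in> S \<Longrightarrow> Re (f k0) > 0 \<Longrightarrow> Re (sum f S) > 0"
proof -
  show "Im (sum f S) = 0" using nn by (simp add: Im_sum)
  show "Re (sum f S) \<ge> 0" using nn by (simp add: Re_sum sum_nonneg)
  assume k0: "k0 \<in> S" "Re (f k0) > 0"
  have "Re (f k0) \<le> (\<Sum>k\<in>S. Re (f k))"
    by (rule member_le_sum) (use nn fin k0 in auto)
  then show "Re (sum f S) > 0" using k0 by (simp add: Re_sum)
qed

lemma qform_zero_vec[simp]: "qform n A (0\<^sub>v n) = 0"
  by (simp add: qform_def)

lemma pd_nonneg:
  assumes "positive_definite n A" "v \<in> carrier_vec n"
  shows "Im (qform n A v) = 0 \<and> Re (qform n A v) \<ge> 0"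
proof (cases "v = 0\<^sub>v n")
  case True
  then show ?thesis by simp
next
  case False
  then show ?thesis using assms by (auto simp: positive_definite_def less_imp_le)
qed

lemma pd_pos: "positive_definite n A \<Longrightarrow> positive_op n A"
  using pd_nonneg[of n A] by (auto simp: positive_op_def positive_definite_def)

lemma slc_carrier[simp]: "slc n b k w \<in> carrier_vec n" by (simp add: slc_def)
lemma lft_carrier[simp]: "lft n b k v \<in> carrier_vec (n*b)" by (simp add: lft_def)

lemma pos_kron_id:
  assumes "positive_op n R"
  shows "positive_op (n*b) (kron R (1\<^sub>m b))"
proof -
  have R: "R \<in> carrier_mat n n" using assms by (simp add: positive_op_def)
  show ?thesis unfolding positive_op_def
  proof (intro conjI ballI)
    show "kron R (1\<^sub>m b) \<in> carrier_mat (n*b) (n*b)" using R by simp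
    fix w :: "complex vec" assume "w \<in> carrier_vec (n*b)"
    have nn: "\<And>k. k \<in> {..<b} \<Longrightarrow> Im (qform n R (slc n b k w)) = 0 \<and> Re (qform n R (slc n b k w)) \<ge> 0"
      using assms by (simp add: positive_op_def)
    show "Im (qform (n*b) (kron R (1\<^sub>m b)) w) = 0" "Re (qform (n*b) (kron R (1\<^sub>m b)) w) \<ge> 0"
      unfolding qform_kron_id[OF R] using sum_re_pos[OF finite_lessThan nn] by auto
  qed
qed

lemma pd_kron_id:
  assumes "positive_definite n R"
  shows "positive_definite (n*b) (kron R (1\<^sub>m b))"
proof -
  have R: "R \<in> carrier_mat n n" using assms by (simp add: positive_definite_def)
  show ?thesis unfolding positive_definite_def
  proof (intro conjI ballI impI)
    show "kron R (1\<^sub>m b) \<in> carrier_mat (n*b) (n*b)" using R by simp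
    fix w :: "complex vec" assume w: "w \<in> carrier_vec (n*b)"
    have nn: "\<And>k. k \<in> {..<b} \<Longrightarrow> Im (qform n R (slc n b k w)) = 0 \<and> Re (qform n R (slc n b k w)) \<ge> 0"
      using pd_nonneg[OF assms] by simp
    show "Im (qform (n*b) (kron R (1\<^sub>m b)) w) = 0"
      unfolding qform_kron_id[OF R] using sum_re_pos[OF finite_lessThan nn] by auto
    assume "w \<noteq> 0\<^sub>v (n*b)"
    then obtain x where x: "x < n*b" "w $ x \<noteq> 0" using w by (metis eq_vecI carrier_vecD index_zero_vec(1,2))
    define i k where "i = x div b" "k = x mod b"
    have ik: "i < n" "k < b" "x = i*b+k" using x idx_split unfolding i_k_def by auto
    have "slc n b k w $ i \<noteq> 0" using ik x by (simp add: slc_def)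
    hence "slc n b k w \<noteq> 0\<^sub>v n" using ik by auto
    hence pos: "Re (qform n R (slc n b k w)) > 0" using assms by (simp add: positive_definite_def)
    have nn2: "\<And>k'. k' \<in> {..<b} - {k} \<Longrightarrow> 0 \<le> Re (qform n R (slc n b k' w))" using nn by blast
    have le: "Re (qform n R (slc n b k w)) \<le> (\<Sum>k'\<in>{..<b}. Re (qform n R (slc n b k' w)))"
      by (rule member_le_sum[OF _ nn2]) (use ik in simp_all)
    have "Re (\<Sum>k'\<in>{..<b}. qform n R (slc n b k' w)) = (\<Sum>k'\<in>{..<b}. Re (qform n R (slc n b k' w)))"
      by (rule Re_sum)
    hence "Re (\<Sum>k'\<in>{..<b}. qform n R (slc n b k' w)) > 0" using pos le by linarith
    then show "Re (qform (n*b) (kron R (1\<^sub>m b)) w) > 0"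
      unfolding qform_kron_id[OF R] by simp
  qed
qed

lemma pos_ptrace:
  assumes "positive_op (n*b) Y"
  shows "positive_op n (ptrace2 n b Y)"
proof -
  have Y: "Y \<in> carrier_mat (n*b) (n*b)" using assms by (simp add: positive_op_def)
  show ?thesis unfolding positive_op_def
  proof (intro conjI ballI)
    show "ptrace2 n b Y \<in> carrier_mat n n" by (simp add: ptrace2_def)
    fix v :: "complex vec" assume "v \<in> carrier_vec n"
    have nn: "\<And>k. k \<in> {..<b} \<Longrightarrow> Im (qform (n*b) Y (lft n b k v)) = 0 \<and> Re (qform (n*b) Y (lft n b k v)) \<ge> 0"
      using assms by (simp add: positive_op_def)
    show "Im (qform n (ptrace2 n b Y) v) = 0" "Re (qform n (ptrace2 n b Y) v) \<ge> 0"
      unfolding qform_ptrace[OF Y] using sum_re_pos[OF finite_lessThan nn] by auto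
  qed
qed

lemma pd_ptrace:
  assumes "positive_definite (n*b) Y" and b: "b > 0"
  shows "positive_definite n (ptrace2 n b Y)"
proof -
  have Y: "Y \<in> carrier_mat (n*b) (n*b)" using assms by (simp add: positive_definite_def)
  show ?thesis unfolding positive_definite_def
  proof (intro conjI ballI impI)
    show "ptrace2 n b Y \<in> carrier_mat n n" by (simp add: ptrace2_def)
    fix v :: "complex vec" assume v: "v \<in> carrier_vec n"
    have nn: "\<And>k. k \<in> {..<b} \<Longrightarrow> Im (qform (n*b) Y (lft n b k v)) = 0 \<and> Re (qform (n*b) Y (lft n b k v)) \<ge> 0"
      using pd_nonneg[OF assms(1)] by simp
    show "Im (qform n (ptrace2 n b Y) v) = 0"
      unfolding qform_ptrace[OF Y] using sum_re_pos[OF finite_lessThan nn] by auto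
    assume "v \<noteq> 0\<^sub>v n"
    then obtain i where i: "i < n" "v $ i \<noteq> 0" using v by (metis eq_vecI carrier_vecD index_zero_vec(1,2))
    have "lft n b 0 v $ (i*b+0) = v $ i" using i b by (simp add: lft_def del: add_0_right)
    hence "lft n b 0 v \<noteq> 0\<^sub>v (n*b)" using i b idx_bound[of i n 0 b] by auto
    hence pos: "Re (qform (n*b) Y (lft n b 0 v)) > 0" using assms by (simp add: positive_definite_def)
    have nn2: "\<And>k'. k' \<in> {..<b} - {0} \<Longrightarrow> 0 \<le> Re (qform (n*b) Y (lft n b k' v))" using nn by blast
    have le: "Re (qform (n*b) Y (lft n b 0 v)) \<le> (\<Sum>k'\<in>{..<b}. Re (qform (n*b) Y (lft n b k' v)))"
      by (rule member_le_sum[OF _ nn2]) (use b in simp_all)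
    have "Re (\<Sum>k'\<in>{..<b}. qform (n*b) Y (lft n b k' v)) = (\<Sum>k'\<in>{..<b}. Re (qform (n*b) Y (lft n b k' v)))"
      by (rule Re_sum)
    hence "Re (\<Sum>k'\<in>{..<b}. qform (n*b) Y (lft n b k' v)) > 0" using pos le by linarith
    then show "Re (qform n (ptrace2 n b Y) v) > 0"
      unfolding qform_ptrace[OF Y] by simp
  qed
qed

lemma adj_mult_vec_carrier: "B \<in> carrier_mat n m \<Longrightarrow> v \<in> carrier_vec n \<Longrightarrow> adj B *\<^sub>v v \<in> carrier_vec m"
  by (rule mult_mat_vec_carrier[OF adj_carrier])

lemma pos_congr:
  assumes "positive_op m Y" and B: "B \<in> carrier_mat n m"
  shows "positive_op n (B * Y * adj B)"
proof -
  have Y: "Y \<in> carrier_mat m m" using assms by (simp add: positive_op_def)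
  show ?thesis unfolding positive_op_def
  proof (intro conjI ballI)
    show "B * Y * adj B \<in> carrier_mat n n" using mult_carrier_mat[OF mult_carrier_mat[OF B Y] adj_carrier[OF B]] .
    fix v :: "complex vec" assume v: "v \<in> carrier_vec n"
    have w: "adj B *\<^sub>v v \<in> carrier_vec m" by (rule adj_mult_vec_carrier[OF B v])
    have "Im (qform m Y (adj B *\<^sub>v v)) = 0 \<and> 0 \<le> Re (qform m Y (adj B *\<^sub>v v))"
      using bspec[OF conjunct2[OF assms(1)[unfolded positive_op_def]] w] .
    then show "Im (qform n (B * Y * adj B) v) = 0" "Re (qform n (B * Y * adj B) v) \<ge> 0"
      unfolding qform_congr[OF B Y v] by simp_all
  qed
qed

lemma pd_congr:
  assumes "positive_definite m Y" and B: "B \<in> carrier_mat n m"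
    and C: "C \<in> carrier_mat n m" and inv: "C * adj B = 1\<^sub>m n"
  shows "positive_definite n (B * Y * adj B)"
proof -
  have Y: "Y \<in> carrier_mat m m" using assms by (simp add: positive_definite_def)
  show ?thesis unfolding positive_definite_def
  proof (intro conjI ballI impI)
    show "B * Y * adj B \<in> carrier_mat n n" using mult_carrier_mat[OF mult_carrier_mat[OF B Y] adj_carrier[OF B]] .
    fix v :: "complex vec" assume v: "v \<in> carrier_vec n"
    have w: "adj B *\<^sub>v v \<in> carrier_vec m" by (rule adj_mult_vec_carrier[OF B v])
    have "Im (qform m Y (adj B *\<^sub>v v)) = 0"
      using bspec[OF conjunct2[OF assms(1)[unfolded positive_definite_def]] w] by (rule conjunct1)
    then show "Im (qform n (B * Y * adj B) v) = 0"
      unfolding qform_congr[OF B Y v] by simp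
    assume v0: "v \<noteq> 0\<^sub>v n"
    have "adj B *\<^sub>v v \<noteq> 0\<^sub>v m"
    proof
      assume z: "adj B *\<^sub>v v = 0\<^sub>v m"
      have "v = (C * adj B) *\<^sub>v v" using inv v by simp
      also have "\<dots> = C *\<^sub>v (adj B *\<^sub>v v)" using C B v by (simp add: assoc_mult_mat_vec[of _ n m _ n])
      also have "\<dots> = 0\<^sub>v n" unfolding z using C by (intro eq_vecI) auto
      finally show False using v0 by simp
    qed
    then have "Re (qform m Y (adj B *\<^sub>v v)) > 0"
      using bspec[OF conjunct2[OF assms(1)[unfolded positive_definite_def]] w] by simp
    then show "Re (qform n (B * Y * adj B) v) > 0"
      unfolding qform_congr[OF B Y v] by simp
  qed
qed

lemma qform_smult:
  assumes A: "A \<in> carrier_mat n n"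
  shows "qform n (c \<cdot>\<^sub>m A) v = c * qform n A v"
  unfolding qform_def sum_distrib_left
proof (intro sum.cong refl)
  fix i k assume "i \<in> {..<n}" "k \<in> {..<n}"
  then have "(c \<cdot>\<^sub>m A) $$ (i,k) = c * A $$ (i,k)" using A by simp
  then show "cnj (v $ i) * (c \<cdot>\<^sub>m A) $$ (i, k) * v $ k = c * (cnj (v $ i) * A $$ (i, k) * v $ k)"
    by (simp only: mult_ac)
qed

lemma pd_smult:
  assumes pd: "positive_definite n A" and c: "c > 0"
  shows "positive_definite n (complex_of_real c \<cdot>\<^sub>m A)"
proof -
  have A: "A \<in> carrier_mat n n" using pd by (simp add: positive_definite_def)
  show ?thesis unfolding positive_definite_def
  proof (intro conjI ballI impI)
    show "complex_of_real c \<cdot>\<^sub>m A \<in> carrier_mat n n" using A by simp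
    fix v :: "complex vec" assume v: "v \<in> carrier_vec n"
    have q: "qform n (complex_of_real c \<cdot>\<^sub>m A) v = complex_of_real c * qform n A v"
      by (rule qform_smult[OF A])
    have "Im (qform n A v) = 0" using pd v by (simp add: positive_definite_def)
    then show "Im (qform n (complex_of_real c \<cdot>\<^sub>m A) v) = 0" unfolding q by simp
    assume "v \<noteq> 0\<^sub>v n"
    then have "Re (qform n A v) > 0" using pd v by (simp add: positive_definite_def)
    then show "Re (qform n (complex_of_real c \<cdot>\<^sub>m A) v) > 0" unfolding q using c by simp
  qed
qed

lemma pd_one: "positive_definite n (1\<^sub>m n)"
  unfolding positive_definite_def
proof (intro conjI ballI impI)
  fix v :: "complex vec" assume v: "v \<in> carrier_vec n"
  have q: "qform n (1\<^sub>m n) v = (\<Sum>i<n. complex_of_real ((cmod (v $ i))\<^sup>2))"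
  proof -
    have "qform n (1\<^sub>m n) v = (\<Sum>i<n. cnj (v $ i) * v $ i)"
      unfolding qform_def
    proof (intro sum.cong refl)
      fix i assume i: "i \<in> {..<n}"
      have "(\<Sum>k<n. cnj (v $ i) * 1\<^sub>m n $$ (i, k) * v $ k) = (\<Sum>k<n. if k = i then cnj (v $ i) * v $ i else 0)"
        by (intro sum.cong refl) (use i in auto)
      also have "\<dots> = cnj (v $ i) * v $ i" using i by simp
      finally show "(\<Sum>k<n. cnj (v $ i) * 1\<^sub>m n $$ (i, k) * v $ k) = cnj (v $ i) * v $ i" .
    qed
    also have "\<dots> = (\<Sum>i<n. complex_of_real ((cmod (v $ i))\<^sup>2))"
      by (intro sum.cong refl) (metis complex_norm_square mult.commute)
    finally show ?thesis .
  qed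
  show "Im (qform n (1\<^sub>m n) v) = 0" unfolding q by (simp add: Im_sum)
  assume "v \<noteq> 0\<^sub>v n"
  then obtain i where i: "i < n" "v $ i \<noteq> 0" using v by (metis eq_vecI carrier_vecD index_zero_vec(1,2))
  have le: "(cmod (v $ i))\<^sup>2 \<le> (\<Sum>i<n. (cmod (v $ i))\<^sup>2)" by (rule member_le_sum) (simp_all add: i)
  have "cmod (v $ i) > 0" using i by simp
  hence "(cmod (v $ i))\<^sup>2 > 0" by simp
  hence s: "0 < (\<Sum>i<n. (cmod (v $ i))\<^sup>2)" using le by linarith
  have "Re (qform n (1\<^sub>m n) v) = (\<Sum>i<n. (cmod (v $ i))\<^sup>2)" unfolding q Re_sum by simp
  then show "Re (qform n (1\<^sub>m n) v) > 0" using s by simp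
qed simp



lemma mtrace_cyc:
  assumes A: "A \<in> carrier_mat n m" and B: "B \<in> carrier_mat m n"
  shows "mtrace (A * B) = mtrace (B * A)"
proof -
  have "mtrace (A * B) = (\<Sum>i<n. \<Sum>l<m. A $$ (i,l) * B $$ (l,i))"
    unfolding mtrace_def using A B by (intro sum.cong) (use mult_entry[OF A B] in auto)
  also have "\<dots> = (\<Sum>l<m. \<Sum>i<n. B $$ (l,i) * A $$ (i,l))"
    by (subst sum.swap) (simp add: mult.commute)
  also have "\<dots> = mtrace (B * A)"
    unfolding mtrace_def using A B by (intro sum.cong) (use mult_entry[OF B A] in auto)
  finally show ?thesis .
qed

lemma mtrace_ptrace:
  assumes Y: "Y \<in> carrier_mat (n*b) (n*b)"
  shows "mtrace (ptrace2 n b Y) = mtrace Y"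
  unfolding mtrace_def ptrace2_def using Y by (simp add: sum_idx)

lemma mtrace_kron:
  assumes A: "A \<in> carrier_mat n n" and B: "B \<in> carrier_mat b b"
  shows "mtrace (kron A B) = mtrace A * mtrace B"
proof -
  have "mtrace (kron A B) = (\<Sum>i<n. \<Sum>k<b. kron A B $$ (i*b+k, i*b+k))"
    unfolding mtrace_def using A B by (simp add: sum_idx)
  also have "\<dots> = (\<Sum>i<n. \<Sum>k<b. A $$ (i,i) * B $$ (k,k))"
    by (intro sum.cong refl) (rule kron_entry[OF A B], auto)
  also have "\<dots> = mtrace A * mtrace B"
    unfolding mtrace_def using A B by (simp add: sum_product)
  finally show ?thesis .
qed

lemma mtrace_smult: "A \<in> carrier_mat n n \<Longrightarrow> mtrace (c \<cdot>\<^sub>m A) = c * mtrace A"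
  unfolding mtrace_def by (simp add: sum_distrib_left)

lemma sum_one_if: "i < (n::nat) \<Longrightarrow> (\<Sum>y<n. f y * (if y = i then 1 else 0)) = (f i :: complex)"
  by (simp add: if_distrib sum.delta' cong: if_cong)

lemma sum_one_if': "i < (n::nat) \<Longrightarrow> (\<Sum>y<n. (if y = i then 1 else 0) * f y) = (f i :: complex)"
  using sum_one_if[of i n f] by (simp add: mult.commute)

lemma sum_two_if:
  fixes n :: nat and f :: "nat \<Rightarrow> complex"
  assumes "i < n" "j < n" "i \<noteq> j"
  shows "(\<Sum>y<n. f y * (if y = i then 1 else if y = j then c else 0)) = f i + f j * (c :: complex)"
proof -
  have "(\<Sum>y<n. f y * (if y = i then 1 else if y = j then c else 0))
      = (\<Sum>y<n. (if y = i then f i else 0) + (if y = j then f j * c else 0))"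
    by (intro sum.cong refl) (use assms in auto)
  also have "\<dots> = f i + f j * c" using assms by (simp add: sum.distrib sum.delta')
  finally show ?thesis .
qed

lemma sum_two_if':
  fixes n :: nat and f :: "nat \<Rightarrow> complex"
  assumes "i < n" "j < n" "i \<noteq> j"
  shows "(\<Sum>y<n. (if y = i then 1 else if y = j then c else 0) * f y) = f i + c * f j"
  using sum_two_if[OF assms, of f c] by (simp add: mult.commute)

definition evec :: "nat \<Rightarrow> nat \<Rightarrow> complex vec" where
  "evec n i = vec n (\<lambda>x. if x = i then 1 else 0)"

definition tvec :: "nat \<Rightarrow> nat \<Rightarrow> nat \<Rightarrow> complex \<Rightarrow> complex vec" where
  "tvec n i j c = vec n (\<lambda>x. if x = i then 1 else if x = j then c else 0)"

lemma evec_carrier[simp]: "evec n i \<in> carrier_vec n" by (simp add: evec_def)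
lemma tvec_carrier[simp]: "tvec n i j c \<in> carrier_vec n" by (simp add: tvec_def)

lemma qform_evec:
  assumes "i < n"
  shows "qform n A (evec n i) = A $$ (i,i)"
proof -
  have "qform n A (evec n i) = (\<Sum>x<n. (if x = i then 1 else 0) * (\<Sum>y<n. A $$ (x,y) * (if y = i then 1 else 0)))"
    unfolding qform_def evec_def by (intro sum.cong refl) (auto simp: sum_distrib_left mult_ac intro!: sum.cong)
  also have "\<dots> = (\<Sum>x<n. (if x = i then 1 else 0) * A $$ (x,i))"
    using assms by (subst sum_one_if) auto
  also have "\<dots> = A $$ (i,i)" using assms by (rule sum_one_if')
  finally show ?thesis .
qed

lemma qform_tvec:
  assumes "i < n" "j < n" "i \<noteq> j"
  shows "qform n A (tvec n i j c) = (A $$ (i,i) + A $$ (i,j) * c) + cnj c * (A $$ (j,i) + A $$ (j,j) * c)"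
proof -
  have "qform n A (tvec n i j c) = (\<Sum>x<n. (if x = i then 1 else if x = j then cnj c else 0) *
      (\<Sum>y<n. A $$ (x,y) * (if y = i then 1 else if y = j then c else 0)))"
    unfolding qform_def tvec_def by (intro sum.cong refl) (auto simp: sum_distrib_left mult_ac intro!: sum.cong)
  also have "\<dots> = (\<Sum>x<n. (if x = i then 1 else if x = j then cnj c else 0) * (A $$ (x,i) + A $$ (x,j) * c))"
    using assms by (subst sum_two_if) auto
  also have "\<dots> = (A $$ (i,i) + A $$ (i,j) * c) + cnj c * (A $$ (j,i) + A $$ (j,j) * c)"
    using assms by (rule sum_two_if')
  finally show ?thesis .
qed

lemma psd_trace0:
  assumes pos: "positive_op n A" and tr: "mtrace A = 0"
  shows "A = 0\<^sub>m n n"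
proof -
  have A: "A \<in> carrier_mat n n" using pos by (simp add: positive_op_def)
  have q: "\<And>v. v \<in> carrier_vec n \<Longrightarrow> Im (qform n A v) = 0 \<and> Re (qform n A v) \<ge> 0"
    using pos by (simp add: positive_op_def)
  have dIm: "Im (A $$ (i,i)) = 0" and dRe: "Re (A $$ (i,i)) \<ge> 0" if "i < n" for i
    using q[OF evec_carrier, of i] qform_evec[OF that, of A] by auto
  have "(\<Sum>i<n. Re (A $$ (i,i))) = Re (mtrace A)" using A by (simp add: mtrace_def Re_sum)
  also have "\<dots> = 0" using tr by simp
  finally have "\<forall>i\<in>{..<n}. Re (A $$ (i,i)) = 0"
    by (subst sum_nonneg_eq_0_iff[symmetric]) (use dRe in auto)
  hence diag0: "A $$ (i,i) = 0" if "i < n" for i using dIm[OF that] that by (simp add: complex_eq_iff)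
  have off: "A $$ (i,j) = 0" if ij: "i < n" "j < n" "i \<noteq> j" for i j
  proof -
    have s0: "A $$ (i,j) * c + cnj c * A $$ (j,i) = 0" for c
    proof -
      have e: "qform n A (tvec n i j d) = A $$ (i,j) * d + cnj d * A $$ (j,i)" for d
        using qform_tvec[OF ij, of A d] diag0 ij by (simp add: algebra_simps)
      have a: "Im (A $$ (i,j) * c + cnj c * A $$ (j,i)) = 0" "Re (A $$ (i,j) * c + cnj c * A $$ (j,i)) \<ge> 0"
        using q[OF tvec_carrier, of i j c] e[of c] by auto
      have "Re (A $$ (i,j) * (-c) + cnj (-c) * A $$ (j,i)) \<ge> 0"
        using q[OF tvec_carrier, of i j "-c"] e[of "-c"] by auto
      hence "Re (A $$ (i,j) * c + cnj c * A $$ (j,i)) \<le> 0" by simp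
      with a show ?thesis by (simp add: complex_eq_iff)
    qed
    have 1: "A $$ (i,j) + A $$ (j,i) = 0" using s0[of 1] by simp
    have 2: "\<i> * A $$ (i,j) - \<i> * A $$ (j,i) = 0" using s0[of \<i>] by (simp add: mult.commute)
    from 1 2 show ?thesis by (simp add: algebra_simps)
  qed
  show ?thesis
    by (rule eq_matI) (use A diag0 off in \<open>auto\<close>)
qed



lemma evec_nz: "i < n \<Longrightarrow> evec n i \<noteq> 0\<^sub>v n"
proof
  assume i: "i < n" and z: "evec n i = 0\<^sub>v n"
  have "evec n i $ i = 1" using i by (simp add: evec_def)
  then show False using z i by simp
qed

lemma pd_trace:
  assumes pd: "positive_definite n A" and n: "n > 0"
  shows "Im (mtrace A) = 0" "Re (mtrace A) > 0"
proof -
  have A: "A \<in> carrier_mat n n" using pd by (simp add: positive_definite_def)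
  have t: "mtrace A = (\<Sum>i<n. qform n A (evec n i))"
    unfolding mtrace_def using A by (intro sum.cong) (auto simp: qform_evec)
  have each: "Im (qform n A (evec n i)) = 0 \<and> Re (qform n A (evec n i)) > 0" if "i < n" for i
    using pd evec_nz[OF that] by (simp add: positive_definite_def)
  show "Im (mtrace A) = 0" unfolding t Im_sum using each by simp
  have "Re (qform n A (evec n 0)) \<le> (\<Sum>i<n. Re (qform n A (evec n i)))"
    by (rule member_le_sum) (use n each less_imp_le in auto)
  moreover have "Re (qform n A (evec n 0)) > 0" using each n by simp
  ultimately show "Re (mtrace A) > 0" unfolding t Re_sum by linarith
qed

lemma gibbs_props:
  assumes n: "n > 0" and sa: "self_adjoint n H"
  shows "gibbs \<beta> H \<in> carrier_mat n n" "positive_definite n (gibbs \<beta> H)" "mtrace (gibbs \<beta> H) = 1"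
    "\<exists>E F r. E \<in> carrier_mat n n \<and> F \<in> carrier_mat n n \<and> F * adj E = 1\<^sub>m n \<and> r > 0 \<and>
        gibbs \<beta> H = complex_of_real r \<cdot>\<^sub>m (E * 1\<^sub>m n * adj E)"
proof -
  have H: "H \<in> carrier_mat n n" and h: "adj H = H" using sa by (auto simp: self_adjoint_def)
  define a where "a = complex_of_real (-\<beta>/2)"
  define E where "E = mat_exp (a \<cdot>\<^sub>m H)"
  define F where "F = mat_exp ((-a) \<cdot>\<^sub>m H)"
  define G0 where "G0 = mat_exp (complex_of_real (-\<beta>) \<cdot>\<^sub>m H)"
  have Ec: "E \<in> carrier_mat n n" and Fc: "F \<in> carrier_mat n n" and G0c: "G0 \<in> carrier_mat n n"
    using H by (auto simp: E_def F_def G0_def)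
  have aa: "a + a = complex_of_real (-\<beta>)" unfolding a_def by (simp flip: of_real_add)
  have adjE: "adj E = E" unfolding E_def adj_mat_exp_herm[OF H h] by (simp add: a_def)
  have "G0 = E * E" using mat_exp_add_smult[OF H, of a a] aa unfolding G0_def E_def by simp
  also have "\<dots> = E * 1\<^sub>m n * adj E" using Ec adjE by simp
  finally have G0: "G0 = E * 1\<^sub>m n * adj E" .
  have FE: "F * adj E = 1\<^sub>m n"
    using adjE mat_exp_add_smult[OF H, of "-a" a] mat_exp_zero_smult[OF H] unfolding F_def E_def by simp
  have pdG0: "positive_definite n G0"
    unfolding G0 by (rule pd_congr[OF pd_one Ec Fc FE])
  define t where "t = mtrace G0"
  have tIm: "Im t = 0" and tRe: "Re t > 0" using pd_trace[OF pdG0 n] unfolding t_def by auto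
  have treal: "t = complex_of_real (Re t)" using tIm by (simp add: complex_eq_iff)
  have inv: "1 / t = complex_of_real (1 / Re t)" by (subst treal) simp
  have g: "gibbs \<beta> H = complex_of_real (1 / Re t) \<cdot>\<^sub>m G0"
    unfolding gibbs_def G0_def[symmetric] t_def[symmetric] inv ..
  show "gibbs \<beta> H \<in> carrier_mat n n" unfolding g using G0c by simp
  show "\<exists>E F r. E \<in> carrier_mat n n \<and> F \<in> carrier_mat n n \<and> F * adj E = 1\<^sub>m n \<and> r > 0 \<and>
        gibbs \<beta> H = complex_of_real r \<cdot>\<^sub>m (E * 1\<^sub>m n * adj E)"
    using Ec Fc FE tRe g G0 by (intro exI[of _ E] exI[of _ F] exI[of _ "1 / Re t"]) simp
  show "positive_definite n (gibbs \<beta> H)" unfolding g by (rule pd_smult[OF pdG0]) (use tRe in simp)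
  have "mtrace (gibbs \<beta> H) = (1 / t) * t" unfolding g mtrace_smult[OF G0c] using inv t_def by simp
  also have "\<dots> = 1" using tRe by (auto simp: field_simps)
  finally show "mtrace (gibbs \<beta> H) = 1" .
qed

lemma pos_smult:
  assumes pos: "positive_op n A" and c: "c > 0"
  shows "positive_op n (complex_of_real c \<cdot>\<^sub>m A)"
proof -
  have A: "A \<in> carrier_mat n n" using pos by (simp add: positive_op_def)
  show ?thesis unfolding positive_op_def
  proof (intro conjI ballI)
    show "complex_of_real c \<cdot>\<^sub>m A \<in> carrier_mat n n" using A by simp
    fix v :: "complex vec" assume v: "v \<in> carrier_vec n"
    have q: "qform n (complex_of_real c \<cdot>\<^sub>m A) v = complex_of_real c * qform n A v"
      by (rule qform_smult[OF A])
    have "Im (qform n A v) = 0" "Re (qform n A v) \<ge> 0" using pos v by (simp_all add: positive_op_def)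
    then show "Im (qform n (complex_of_real c \<cdot>\<^sub>m A) v) = 0" "Re (qform n (complex_of_real c \<cdot>\<^sub>m A) v) \<ge> 0"
      unfolding q using c by simp_all
  qed
qed

lemma adj_add:
  assumes "A \<in> carrier_mat n m" "B \<in> carrier_mat n m"
  shows "adj (A + B) = adj A + adj B"
  by (rule eq_matI) (use assms in auto)

lemma kron_one: "kron (1\<^sub>m a) (1\<^sub>m b) = 1\<^sub>m (a*b)"
proof (rule eq_matI)
  fix i j assume "i < dim_row (1\<^sub>m (a*b))" "j < dim_col (1\<^sub>m (a*b))"
  hence ij: "i < a*b" "j < a*b" by auto
  have "(i div b = j div b \<and> i mod b = j mod b) \<longleftrightarrow> i = j"
    by (metis div_mult_mod_eq)
  then show "kron (1\<^sub>m a) (1\<^sub>m b) $$ (i,j) = 1\<^sub>m (a*b) $$ (i,j)"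
    using ij idx_split[OF ij(1)] idx_split[OF ij(2)] by (auto simp: kron_def)
qed (auto simp: kron_def)



lemma step_props:
  assumes dS: "dS > 0" and dE: "dE > 0" and hS: "self_adjoint dS HS" and hE: "self_adjoint dE HE"
    and hV: "self_adjoint (dS * dE) V"
  shows "positive_definite dS \<rho> \<Longrightarrow> positive_definite dS (rep_map dS dE HS HE V \<tau> \<beta> \<rho>)"
    "positive_op dS \<rho> \<Longrightarrow> positive_op dS (rep_map dS dE HS HE V \<tau> \<beta> \<rho>)"
    "\<rho> \<in> carrier_mat dS dS \<Longrightarrow> mtrace (rep_map dS dE HS HE V \<tau> \<beta> \<rho>) = mtrace \<rho>"
proof -
  define N where "N = dS * dE"
  have HSc: "HS \<in> carrier_mat dS dS" and aHS: "adj HS = HS" using hS by (auto simp: self_adjoint_def)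
  have HEc: "HE \<in> carrier_mat dE dE" and aHE: "adj HE = HE" using hE by (auto simp: self_adjoint_def)
  have Vc: "V \<in> carrier_mat N N" and aV: "adj V = V" using hV by (auto simp: self_adjoint_def N_def)
  define Hm where "Hm = kron HS (1\<^sub>m dE) + kron (1\<^sub>m dS) HE + V"
  have k1: "kron HS (1\<^sub>m dE) \<in> carrier_mat N N" using HSc by (simp add: N_def)
  have k2: "kron (1\<^sub>m dS) HE \<in> carrier_mat N N" using HEc by (simp add: N_def)
  have Hc: "Hm \<in> carrier_mat N N" unfolding Hm_def using k1 k2 Vc by simp
  have aH: "adj Hm = Hm"
  proof -
    have "adj Hm = adj (kron HS (1\<^sub>m dE) + kron (1\<^sub>m dS) HE) + adj V"
      unfolding Hm_def by (rule adj_add) (use k1 k2 Vc in auto)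
    also have "\<dots> = adj (kron HS (1\<^sub>m dE)) + adj (kron (1\<^sub>m dS) HE) + adj V"
      using adj_add[OF k1 k2] by simp
    also have "\<dots> = Hm" unfolding Hm_def adj_kron aHS aHE aV adj_one ..
    finally show ?thesis .
  qed
  define c where "c = - (\<i> * complex_of_real \<tau>)"
  have cc: "cnj c = - c" unfolding c_def by simp
  define U where "U = unitary_step dS dE HS HE V \<tau>"
  have U: "U = mat_exp (c \<cdot>\<^sub>m Hm)" unfolding U_def unitary_step_def c_def Hm_def ..
  have Uc: "U \<in> carrier_mat N N" unfolding U using Hc by simp
  have UU1: "U * adj U = 1\<^sub>m N" and UU2: "adj U * U = 1\<^sub>m N"
    unfolding U using mat_exp_unitary[OF Hc aH cc] by auto
  define g where "g = gibbs \<beta> HE"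
  have gc: "g \<in> carrier_mat dE dE" and trg: "mtrace g = 1"
    unfolding g_def using gibbs_props[OF dE hE] by auto
  obtain E F r where Ec: "E \<in> carrier_mat dE dE" and Fc: "F \<in> carrier_mat dE dE"
    and FE: "F * adj E = 1\<^sub>m dE" and r: "r > 0" and gEq: "g = complex_of_real r \<cdot>\<^sub>m (E * 1\<^sub>m dE * adj E)"
    using gibbs_props(4)[OF dE hE, of \<beta>] unfolding g_def by blast
  have rep: "rep_map dS dE HS HE V \<tau> \<beta> \<rho> = ptrace2 dS dE (U * kron \<rho> g * adj U)" for \<rho>
    unfolding rep_map_def U_def g_def Let_def ..
  define K where "K = kron (1\<^sub>m dS) E"
  have Kc: "K \<in> carrier_mat N N" unfolding K_def N_def using Ec by simp
  have CK: "kron (1\<^sub>m dS) F * adj K = 1\<^sub>m N"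
  proof -
    have "kron (1\<^sub>m dS) F * adj K = kron (1\<^sub>m dS) F * kron (1\<^sub>m dS) (adj E)"
      unfolding K_def adj_kron adj_one ..
    also have "\<dots> = kron (1\<^sub>m dS * 1\<^sub>m dS) (F * adj E)"
      by (rule kron_mult) (use Ec Fc in auto)
    also have "\<dots> = 1\<^sub>m N" unfolding FE N_def by (simp add: kron_one)
    finally show ?thesis .
  qed
  have CKc: "kron (1\<^sub>m dS) F \<in> carrier_mat N N" unfolding N_def using Fc by simp
  have kdec: "kron \<rho> (E * 1\<^sub>m dE * adj E) = K * kron \<rho> (1\<^sub>m dE) * adj K" if \<rho>: "\<rho> \<in> carrier_mat dS dS" for \<rho>
  proof -
    have "K * kron \<rho> (1\<^sub>m dE) = kron (1\<^sub>m dS * \<rho>) (E * 1\<^sub>m dE)"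
      unfolding K_def by (rule kron_mult) (use Ec \<rho> in auto)
    also have "\<dots> = kron \<rho> E" using \<rho> Ec by simp
    finally have "K * kron \<rho> (1\<^sub>m dE) * adj K = kron \<rho> E * kron (1\<^sub>m dS) (adj E)"
      unfolding K_def adj_kron adj_one by simp
    also have "\<dots> = kron (\<rho> * 1\<^sub>m dS) (E * adj E)"
      by (rule kron_mult) (use Ec \<rho> in auto)
    also have "\<dots> = kron \<rho> (E * 1\<^sub>m dE * adj E)" using \<rho> Ec by simp
    finally show ?thesis by simp
  qed
  have kg: "kron \<rho> g = complex_of_real r \<cdot>\<^sub>m (K * kron \<rho> (1\<^sub>m dE) * adj K)" if \<rho>: "\<rho> \<in> carrier_mat dS dS" for \<rho>
    unfolding gEq kron_smult_right kdec[OF \<rho>] ..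
  have Xc: "kron \<rho> g \<in> carrier_mat N N" if "\<rho> \<in> carrier_mat dS dS" for \<rho>
    using that gc unfolding N_def by simp
  show "positive_definite dS (rep_map dS dE HS HE V \<tau> \<beta> \<rho>)" if pd: "positive_definite dS \<rho>"
  proof -
    have \<rho>: "\<rho> \<in> carrier_mat dS dS" using pd by (simp add: positive_definite_def)
    have "positive_definite N (K * kron \<rho> (1\<^sub>m dE) * adj K)"
      by (rule pd_congr[OF _ Kc CKc CK]) (use pd_kron_id[OF pd, of dE] in \<open>simp add: N_def\<close>)
    hence "positive_definite N (kron \<rho> g)" unfolding kg[OF \<rho>] by (rule pd_smult) (rule r)
    hence "positive_definite N (U * kron \<rho> g * adj U)" by (rule pd_congr[OF _ Uc Uc UU1])
    hence "positive_definite dS (ptrace2 dS dE (U * kron \<rho> g * adj U))"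
      unfolding N_def by (rule pd_ptrace[OF _ dE])
    then show ?thesis unfolding rep .
  qed
  show "positive_op dS (rep_map dS dE HS HE V \<tau> \<beta> \<rho>)" if pos: "positive_op dS \<rho>"
  proof -
    have \<rho>: "\<rho> \<in> carrier_mat dS dS" using pos by (simp add: positive_op_def)
    have "positive_op N (K * kron \<rho> (1\<^sub>m dE) * adj K)"
      by (rule pos_congr[OF _ Kc]) (use pos_kron_id[OF pos, of dE] in \<open>simp add: N_def\<close>)
    hence "positive_op N (kron \<rho> g)" unfolding kg[OF \<rho>] by (rule pos_smult) (rule r)
    hence "positive_op N (U * kron \<rho> g * adj U)" by (rule pos_congr[OF _ Uc])
    hence "positive_op dS (ptrace2 dS dE (U * kron \<rho> g * adj U))"
      unfolding N_def by (rule pos_ptrace)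
    then show ?thesis unfolding rep .
  qed
  show "mtrace (rep_map dS dE HS HE V \<tau> \<beta> \<rho>) = mtrace \<rho>" if \<rho>: "\<rho> \<in> carrier_mat dS dS"
  proof -
    have X: "kron \<rho> g \<in> carrier_mat N N" by (rule Xc[OF \<rho>])
    have UX: "U * kron \<rho> g \<in> carrier_mat N N" using Uc X by simp
    have aU: "adj U \<in> carrier_mat N N" using Uc by simp
    have "mtrace (rep_map dS dE HS HE V \<tau> \<beta> \<rho>) = mtrace (U * kron \<rho> g * adj U)"
      unfolding rep by (rule mtrace_ptrace) (use UX aU in \<open>simp add: N_def\<close>)
    also have "\<dots> = mtrace (adj U * (U * kron \<rho> g))" by (rule mtrace_cyc[OF UX aU])
    also have "adj U * (U * kron \<rho> g) = (adj U * U) * kron \<rho> g"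
      using aU Uc X by (simp add: assoc_mult_mat[of _ N N _ N _ N])
    also have "\<dots> = kron \<rho> g" unfolding UU2 by (rule left_mult_one_mat[OF X])
    also have "mtrace (kron \<rho> g) = mtrace \<rho> * mtrace g" by (rule mtrace_kron[OF \<rho> gc])
    finally show ?thesis using trg by simp
  qed
qed



lemma fold_pres:
  assumes "\<forall>i\<in>set xs. \<forall>x. P x \<longrightarrow> P (f i x)" "P x"
  shows "P (fold f xs x)"
  using assms by (induction xs arbitrary: x) auto

lemma upt_split3:
  assumes "1 \<le> j" "j \<le> M"
  shows "[1..<M+1] = [1..<j] @ j # [Suc j..<M+1]"
proof -
  have "[1..<M+1] = [1..<j] @ [j..<j+(M+1-j)]" using upt_add_eq_append[of 1 j "M+1-j"] assms by simp
  also have "j+(M+1-j) = M+1" using assms by simp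
  also have "[j..<M+1] = j # [Suc j..<M+1]" using assms by (simp add: upt_conv_Cons)
  finally show ?thesis .
qed

theorem mainTheorem8:
  fixes M dS :: nat and dE :: "nat \<Rightarrow> nat"
    and HS :: "complex mat" and HE V :: "nat \<Rightarrow> complex mat"
    and \<tau> \<zeta> :: "nat \<Rightarrow> real" and \<beta>_ref :: real
  assumes "dS > 0"
    and "\<forall>j\<in>{1..M}. dE j > 0"
    and "self_adjoint dS HS"
    and "\<forall>j\<in>{1..M}. self_adjoint (dE j) (HE j)"
    and "\<forall>j\<in>{1..M}. self_adjoint (dS * dE j) (V j)"
    and "\<forall>j\<in>{1..M}. \<tau> j > 0"
    and "\<beta>_ref > 0"
  shows "(\<forall>j\<in>{1..M}. \<forall>\<rho>. positive_definite dS \<rho> \<longrightarrow>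
            positive_definite dS (rep_map dS (dE j) HS (HE j) (V j) (\<tau> j) (\<beta>_ref - \<zeta> j) \<rho>))
       \<and> ((\<exists>j\<in>{1..M}. positivity_improving dS
               (rep_map dS (dE j) HS (HE j) (V j) (\<tau> j) (\<beta>_ref - \<zeta> j)))
          \<longrightarrow> positivity_improving dS
               (cycle_map M (\<lambda>j. rep_map dS (dE j) HS (HE j) (V j) (\<tau> j) (\<beta>_ref - \<zeta> j))))"
proof -
  define L where "L = (\<lambda>j. rep_map dS (dE j) HS (HE j) (V j) (\<tau> j) (\<beta>_ref - \<zeta> j))"
  have S: "\<And>j \<rho>. j \<in> {1..M} \<Longrightarrow> positive_definite dS \<rho> \<Longrightarrow> positive_definite dS (L j \<rho>)"
    "\<And>j \<rho>. j \<in> {1..M} \<Longrightarrow> positive_op dS \<rho> \<Longrightarrow> positive_op dS (L j \<rho>)"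
    "\<And>j \<rho>. j \<in> {1..M} \<Longrightarrow> \<rho> \<in> carrier_mat dS dS \<Longrightarrow> mtrace (L j \<rho>) = mtrace \<rho>"
  proof -
    have A: "dE j > 0" "self_adjoint (dE j) (HE j)" "self_adjoint (dS * dE j) (V j)" if "j \<in> {1..M}" for j
      using assms(2,4,5) that by auto
    show "\<And>j \<rho>. j \<in> {1..M} \<Longrightarrow> positive_definite dS \<rho> \<Longrightarrow> positive_definite dS (L j \<rho>)"
      unfolding L_def by (rule step_props(1)[OF assms(1) A(1) assms(3) A(2) A(3)])
    show "\<And>j \<rho>. j \<in> {1..M} \<Longrightarrow> positive_op dS \<rho> \<Longrightarrow> positive_op dS (L j \<rho>)"
      unfolding L_def by (rule step_props(2)[OF assms(1) A(1) assms(3) A(2) A(3)])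
    show "\<And>j \<rho>. j \<in> {1..M} \<Longrightarrow> \<rho> \<in> carrier_mat dS dS \<Longrightarrow> mtrace (L j \<rho>) = mtrace \<rho>"
      unfolding L_def by (rule step_props(3)[OF assms(1) A(1) assms(3) A(2) A(3)])
  qed
  have P1: "\<forall>j\<in>{1..M}. \<forall>\<rho>. positive_definite dS \<rho> \<longrightarrow> positive_definite dS (L j \<rho>)"
    using S(1) by blast
  have NZ: "positive_op dS (L j \<rho>) \<and> L j \<rho> \<noteq> 0\<^sub>m dS dS"
    if j: "j \<in> {1..M}" and pos: "positive_op dS \<rho> \<and> \<rho> \<noteq> 0\<^sub>m dS dS" for j \<rho>
  proof
    show "positive_op dS (L j \<rho>)" using S(2)[OF j] pos by blast
    show "L j \<rho> \<noteq> 0\<^sub>m dS dS"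
    proof
      assume z: "L j \<rho> = 0\<^sub>m dS dS"
      have \<rho>c: "\<rho> \<in> carrier_mat dS dS" using pos by (simp add: positive_op_def)
      have "mtrace \<rho> = mtrace (L j \<rho>)" using S(3)[OF j \<rho>c] by simp
      also have "\<dots> = 0" unfolding z by (simp add: mtrace_def)
      finally have "\<rho> = 0\<^sub>m dS dS" using psd_trace0[of dS \<rho>] pos by simp
      then show False using pos by blast
    qed
  qed
  have PDnz: "positive_op dS \<rho> \<and> \<rho> \<noteq> 0\<^sub>m dS dS" if "positive_definite dS \<rho>" for \<rho>
  proof
    show "positive_op dS \<rho>" using pd_pos[OF that] .
    show "\<rho> \<noteq> 0\<^sub>m dS dS"
    proof
      assume z: "\<rho> = 0\<^sub>m dS dS"
      have "Re (qform dS \<rho> (evec dS 0)) > 0"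
        using that evec_nz[OF assms(1)] by (simp add: positive_definite_def)
      moreover have "qform dS \<rho> (evec dS 0) = 0" unfolding z by (simp add: qform_def)
      ultimately show False by simp
    qed
  qed
  have P2: "positivity_improving dS (cycle_map M L)" if ex: "\<exists>j\<in>{1..M}. positivity_improving dS (L j)"
  proof -
    obtain j where j: "j \<in> {1..M}" and imp: "positivity_improving dS (L j)" using ex by blast
    show ?thesis unfolding positivity_improving_def
    proof (intro allI impI)
      fix \<rho> assume pos: "positive_op dS \<rho> \<and> \<rho> \<noteq> 0\<^sub>m dS dS"
      have spl: "[1..<M+1] = [1..<j] @ j # [Suc j..<M+1]" using j by (intro upt_split3) auto
      have "positive_op dS (fold L [1..<j] \<rho>) \<and> fold L [1..<j] \<rho> \<noteq> 0\<^sub>m dS dS"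
      proof (rule fold_pres[where P="\<lambda>x. positive_op dS x \<and> x \<noteq> 0\<^sub>m dS dS"])
        show "\<forall>i\<in>set [1..<j]. \<forall>x. positive_op dS x \<and> x \<noteq> 0\<^sub>m dS dS \<longrightarrow> positive_op dS (L i x) \<and> L i x \<noteq> 0\<^sub>m dS dS"
        proof (intro ballI allI impI)
          fix i x assume i: "i \<in> set [1..<j]" and x: "positive_op dS x \<and> x \<noteq> 0\<^sub>m dS dS"
          have "i \<in> {1..M}" using i j by auto
          then show "positive_op dS (L i x) \<and> L i x \<noteq> 0\<^sub>m dS dS" by (rule NZ[OF _ x])
        qed
      qed (rule pos)
      hence pdj: "positive_definite dS (L j (fold L [1..<j] \<rho>))" using imp unfolding positivity_improving_def by blast
      have "positive_definite dS (fold L [Suc j..<M+1] (L j (fold L [1..<j] \<rho>)))"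
      proof (rule fold_pres[where P="positive_definite dS"])
        show "\<forall>i\<in>set [Suc j..<M+1]. \<forall>x. positive_definite dS x \<longrightarrow> positive_definite dS (L i x)"
        proof (intro ballI allI impI)
          fix i x assume i: "i \<in> set [Suc j..<M+1]" and x: "positive_definite dS x"
          have "i \<in> {1..M}" using i j by auto
          then show "positive_definite dS (L i x)" by (rule S(1)[OF _ x])
        qed
      qed (rule pdj)
      then show "positive_definite dS (cycle_map M L \<rho>)"
        unfolding cycle_map_def spl by simp
    qed
  qed
  have "(\<forall>j\<in>{1..M}. \<forall>\<rho>. positive_definite dS \<rho> \<longrightarrow> positive_definite dS (L j \<rho>))
     \<and> ((\<exists>j\<in>{1..M}. positivity_improving dS (L j)) \<longrightarrow> positivity_improving dS (cycle_map M L))"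
    using P1 P2 by (intro conjI impI)
  then show ?thesis unfolding L_def .
qed

end
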